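(* Let $A\in\mathbb{C}^{n\times n}_r$ be represented by its Hartwig-Spindelb\"{o}ck decomposition $A=U\left(\begin{array}{cc}\Sigma K & \Sigma L\\ 0 & 0\end{array}\right)U^*$, where $U\in\mathbb{C}^{n\times n}$ is unitary, $\Sigma={\rm diag}(\sigma_1,\dots,\sigma_r)$ is the diagonal matrix of the (positive) singular values of $A$, and $K\in\mathbb{C}^{r\times r}$, $L\in\mathbb{C}^{r\times(n-r)}$ satisfy $KK^*+LL^*=I_r$. Write $\left(\begin{array}{cc}G_1 & G_2\\ G_3 & G_4\end{array}\right)=U^*GU$ with $G_1\in\mathbb{C}^{r\times r}$, $G_2\in\mathbb{C}^{r\times(n-r)}$, $G_3\in\mathbb{C}^{(n-r)\times r}$, $G_4\in\mathbb{C}^{(n-r)\times(n-r)}$, and let $\Delta=\left(\begin{array}{cc}K & L\end{array}\right)U^*GU\left(\begin{array}{c}K^*\\ L^*\end{array}\right)$. Then: \begin{enumerate}[$(1)$] \item ${\rm rank}(A)={\rm rank}(AA^{\sim})$ if and only if $\Delta$ is nonsingular. \item ${\rm rank}(A)={\rm rank}(A^{\sim}A)$ if and only if $G_1$ is nonsingular. \item If $\Delta$ and $G_1$ are nonsingular, then \begin{align*} A^{\mathfrak{m}}&=GU\left(\begin{array}{cc}K^*(G_1\Sigma\Delta)^{-1} & 0\\ L^*(G_1\Sigma\Delta)^{-1} & 0\end{array}\right)U^*G\\ &=U\left(\begin{array}{cc}(G_1K^*+G_2L^* )(\Sigma\Delta)^{-1} & (G_1K^*+G_2L^* )(G_1\Sigma\Delta)^{-1}G_2\\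 (G_3K^*+G_4L^* )(\Sigma\Delta)^{-1} & (G_3K^*+G_4L^* )(G_1\Sigma\Delta)^{-1}G_2\end{array}\right)U^*. \end{align*} \end{enumerate}
   Context: $G=\left(\begin{array}{cc}1&0\\0&-I_{n-1}\end{array}\right)$ is the Minkowski metric matrix of order $n$; the Minkowski adjoint of $A\in\mathbb{C}^{m\times n}$ is $A^{\sim}=GA^*F$ with $G,F$ the Minkowski metric matrices of orders $n$ and $m$. The Minkowski inverse $A^{\mathfrak{m}}$ of $A$ is the unique $X$ (when it exists) with $AXA=A$, $XAX=X$, $(AX)^{\sim}=AX$, $(XA)^{\sim}=XA$. *)

theory Defs
  imports "Jordan_Normal_Form.Schur_Decomposition" "Jordan_Normal_Form.DL_Rank"
begin

text \<open>Conjugate transpose: the library's mat_adjoint (Schur_Decomposition).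
  Rank: the library's vec_space.rank (DL_Rank), with parameter = number of rows.\<close>

definition unitary_mat :: "nat \<Rightarrow> complex mat \<Rightarrow> bool" where
  "unitary_mat n U \<longleftrightarrow> U \<in> carrier_mat n n \<and> U * mat_adjoint U = 1\<^sub>m n \<and> mat_adjoint U * U = 1\<^sub>m n"

definition mat_inv :: "complex mat \<Rightarrow> complex mat" where
  "mat_inv A = (THE B. B \<in> carrier_mat (dim_row A) (dim_row A) \<and> inverts_mat A B \<and> inverts_mat B A)"

definition mink_G :: "nat \<Rightarrow> complex mat" where
  "mink_G n = mat n n (\<lambda>(i,j). if i = j then (if i = 0 then 1 else -1) else 0)"

definition mink_adj :: "complex mat \<Rightarrow> complex mat" where
  "mink_adj A = mink_G (dim_col A) * mat_adjoint A * mink_G (dim_row A)"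

definition is_mink_inv :: "complex mat \<Rightarrow> complex mat \<Rightarrow> bool" where
  "is_mink_inv A X \<longleftrightarrow> X \<in> carrier_mat (dim_col A) (dim_row A) \<and>
     A * X * A = A \<and> X * A * X = X \<and> mink_adj (A * X) = A * X \<and> mink_adj (X * A) = X * A"

definition mink_inv :: "complex mat \<Rightarrow> complex mat" where
  "mink_inv A = (THE X. is_mink_inv A X)"

end

theory Submission
  imports Defs
begin


lemma adj_dims[simp]: "dim_row (mat_adjoint A) = dim_col A" "dim_col (mat_adjoint A) = dim_row A"
  unfolding mat_adjoint_def by auto

lemma adj_index[simp]: "i < dim_col A \<Longrightarrow> j < dim_row A \<Longrightarrow> mat_adjoint A $$ (i,j) = cnj (A $$ (j,i))"
  unfolding mat_adjoint_def by (simp add: mat_of_rows_def)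

lemma adj_carrier[simp]: assumes "A \<in> carrier_mat a b" shows "mat_adjoint A \<in> carrier_mat b a"
proof (rule carrier_matI)
  show "dim_row (mat_adjoint A) = b" using carrier_matD(2)[OF assms] by simp
  show "dim_col (mat_adjoint A) = a" using carrier_matD(1)[OF assms] by simp
qed
lemma adj_adj[simp]: "mat_adjoint (mat_adjoint (A::complex mat)) = A"
  by (rule eq_matI, auto)

lemma adj_mult: assumes d: "dim_col (A::complex mat) = dim_row B" shows "mat_adjoint (A * B) = mat_adjoint B * mat_adjoint A"
proof (rule eq_matI)
  fix i j assume i: "i < dim_row (mat_adjoint B * mat_adjoint A)" and j: "j < dim_col (mat_adjoint B * mat_adjoint A)"
  hence i': "i < dim_col B" and j': "j < dim_row A" by auto
  have "mat_adjoint (A * B) $$ (i,j) = cnj ((A * B) $$ (j,i))" using i' j' by simp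
  also have "(A * B) $$ (j,i) = row A j \<bullet> col B i" using i' j' by simp
  also have "\<dots> = (\<Sum>k\<in>{0..<dim_row B}. A $$ (j,k) * B $$ (k,i))"
    unfolding scalar_prod_def by (rule sum.cong, use i' j' d in auto)
  also have "cnj \<dots> = (\<Sum>k\<in>{0..<dim_row B}. cnj (A $$ (j,k)) * cnj (B $$ (k,i)))"
    by (simp only: cnj_sum complex_cnj_mult)
  also have "\<dots> = (\<Sum>k\<in>{0..<dim_row B}. cnj (B $$ (k,i)) * cnj (A $$ (j,k)))"
    by (rule sum.cong, simp_all add: mult.commute)
  also have "\<dots> = row (mat_adjoint B) i \<bullet> col (mat_adjoint A) j"
    unfolding scalar_prod_def by (rule sum.cong, use i' j' d in auto)
  also have "\<dots> = (mat_adjoint B * mat_adjoint A) $$ (i,j)" using i' j' by simp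
  finally show "mat_adjoint (A * B) $$ (i,j) = (mat_adjoint B * mat_adjoint A) $$ (i,j)" .
next
  show "dim_row (mat_adjoint (A * B)) = dim_row (mat_adjoint B * mat_adjoint A)" by simp
next
  show "dim_col (mat_adjoint (A * B)) = dim_col (mat_adjoint B * mat_adjoint A)" by simp
qed

lemma adj_add: "dim_row (A::complex mat) = dim_row B \<Longrightarrow> dim_col A = dim_col B \<Longrightarrow> mat_adjoint (A + B) = mat_adjoint A + mat_adjoint B"
  by (rule eq_matI, auto)

lemma adj_one[simp]: "mat_adjoint (1\<^sub>m k :: complex mat) = 1\<^sub>m k"
  by (rule eq_matI, auto)

lemma adj_zero[simp]: "mat_adjoint (0\<^sub>m a b :: complex mat) = 0\<^sub>m b a"
  by (rule eq_matI, auto)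

lemma adj_four_block: "dim_row (A::complex mat) = dim_row B \<Longrightarrow> dim_row C = dim_row D \<Longrightarrow> dim_col A = dim_col C \<Longrightarrow> dim_col B = dim_col D \<Longrightarrow>
  mat_adjoint (four_block_mat A B C D) = four_block_mat (mat_adjoint A) (mat_adjoint C) (mat_adjoint B) (mat_adjoint D)"
  by (rule eq_matI, auto)

lemma massoc: "dim_col (A::'a::semiring_0 mat) = dim_row B \<Longrightarrow> dim_col B = dim_row C \<Longrightarrow> A * B * C = A * (B * C)"
  by (rule assoc_mult_mat[of A "dim_row A" "dim_col A" B "dim_col B" C "dim_col C"], auto)

lemma one_l: "dim_row (A::'a::semiring_1 mat) = k \<Longrightarrow> 1\<^sub>m k * A = A"
  using left_mult_one_mat[of A k "dim_col A"] carrier_matI[of A k "dim_col A"] by auto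
lemma one_r: "dim_col (A::'a::semiring_1 mat) = k \<Longrightarrow> A * 1\<^sub>m k = A"
  using right_mult_one_mat[of A "dim_row A" k] carrier_matI[of A "dim_row A" k] by auto

lemma mink_G_dims[simp]: "dim_row (mink_G k) = k" "dim_col (mink_G k) = k"
  unfolding mink_G_def by auto
lemma mink_G_sq: "mink_G k * mink_G k = 1\<^sub>m k"
proof (rule eq_matI)
  fix i j assume "i < dim_row (1\<^sub>m k :: complex mat)" "j < dim_col (1\<^sub>m k :: complex mat)"
  hence ij: "i < k" "j < k" by auto
  have "(mink_G k * mink_G k) $$ (i,j) = (\<Sum>l<k. mink_G k $$ (i,l) * mink_G k $$ (l,j))"
    using ij by (simp add: scalar_prod_def atLeast0LessThan)
  also have "\<dots> = (\<Sum>l<k. if l = i then mink_G k $$ (i,i) * mink_G k $$ (i,j) else 0)"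
    by (rule sum.cong, auto simp: mink_G_def ij)
  also have "\<dots> = mink_G k $$ (i,i) * mink_G k $$ (i,j)" using ij by simp
  also have "\<dots> = 1\<^sub>m k $$ (i,j)" using ij by (auto simp: mink_G_def)
  finally show "(mink_G k * mink_G k) $$ (i,j) = 1\<^sub>m k $$ (i,j)" .
qed auto
lemma mink_G_adj[simp]: "mat_adjoint (mink_G k) = mink_G k"
  by (rule eq_matI, auto simp: mink_G_def)

lemma det_ne0_inv: assumes M: "(M::complex mat) \<in> carrier_mat k k" shows "invertible_mat M \<longleftrightarrow> det M \<noteq> 0"
proof
  assume "invertible_mat M"
  then obtain B where "inverts_mat M B" "inverts_mat B M" unfolding invertible_mat_def by auto
  hence MB: "M * B = 1\<^sub>m k" and BM: "B * M = 1\<^sub>m (dim_row B)" using M unfolding inverts_mat_def by auto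
  have "dim_col (M * B) = dim_col (1\<^sub>m k :: complex mat)" using MB by simp
  hence "dim_col B = k" by simp
  moreover have "dim_row (B * M) = dim_row (1\<^sub>m (dim_row B) :: complex mat)" using BM by simp
  have "dim_col (B * M) = dim_col (1\<^sub>m (dim_row B) :: complex mat)" using BM by simp
  hence "dim_row B = k" using M by simp
  ultimately have B: "B \<in> carrier_mat k k" by auto
  from arg_cong[OF MB, of det] det_mult[OF M B] show "det M \<noteq> 0" by auto
next
  assume "det M \<noteq> 0"
  from det_non_zero_imp_unit[OF M this, of undefined]
  obtain B where B: "B \<in> carrier_mat k k" "M * B = 1\<^sub>m k" "B * M = 1\<^sub>m k"
    unfolding Units_def ring_mat_def by auto
  thus "invertible_mat M" using M unfolding invertible_mat_def inverts_mat_def square_mat.simps by auto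
qed

lemma mat_inv_props: assumes M: "(M::complex mat) \<in> carrier_mat k k" and inv: "invertible_mat M"
  shows "mat_inv M \<in> carrier_mat k k" "M * mat_inv M = 1\<^sub>m k" "mat_inv M * M = 1\<^sub>m k"
proof -
  from det_non_zero_imp_unit[OF M, of undefined] inv det_ne0_inv[OF M]
  obtain B where B: "B \<in> carrier_mat k k" "M * B = 1\<^sub>m k" "B * M = 1\<^sub>m k"
    unfolding Units_def ring_mat_def by auto
  have P: "B \<in> carrier_mat (dim_row M) (dim_row M) \<and> inverts_mat M B \<and> inverts_mat B M"
    using B M unfolding inverts_mat_def by auto
  have "mat_inv M = B" unfolding mat_inv_def
  proof (rule the_equality)
    show "B \<in> carrier_mat (dim_row M) (dim_row M) \<and> inverts_mat M B \<and> inverts_mat B M" by (rule P)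
    fix C assume C: "C \<in> carrier_mat (dim_row M) (dim_row M) \<and> inverts_mat M C \<and> inverts_mat C M"
    hence C': "C \<in> carrier_mat k k" "M * C = 1\<^sub>m k" using M unfolding inverts_mat_def by auto
    have "C = (B * M) * C" using C' B by simp
    also have "\<dots> = B * (M * C)" by (rule assoc_mult_mat[OF B(1) M C'(1)])
    finally show "C = B" using C' B by simp
  qed
  thus "mat_inv M \<in> carrier_mat k k" "M * mat_inv M = 1\<^sub>m k" "mat_inv M * M = 1\<^sub>m k" using B by auto
qed

lemma left_inv_eq: assumes M: "(M::complex mat) \<in> carrier_mat k k" and inv: "invertible_mat M"
  and B: "B \<in> carrier_mat k k" and BM: "B * M = 1\<^sub>m k" shows "B = mat_inv M"
proof -
  note I = mat_inv_props[OF M inv]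
  have "B = B * (M * mat_inv M)" using I B by simp
  also have "\<dots> = (B * M) * mat_inv M" by (rule assoc_mult_mat[OF B M I(1), symmetric])
  finally show ?thesis using BM I by simp
qed



lemma (in vec_space) rank_mult_left_le:
  assumes X: "X \<in> carrier_mat n k" and Y: "Y \<in> carrier_mat k m"
  shows "rank (X * Y) \<le> rank X"
proof -
  let ?S = "span (set (cols X))"
  have "set (cols (X * Y)) \<subseteq> ?S"
  proof
    fix v assume "v \<in> set (cols (X * Y))"
    then obtain j where j: "j < m" "v = col (X * Y) j" using X Y
      by (metis cols_length cols_nth in_set_conv_nth index_mult_mat(3) carrier_matD(2))
    hence "v = X *\<^sub>v col Y j" using X Y by auto
    moreover have "col Y j \<in> carrier_vec k" using Y j by auto
    ultimately have "v \<in> col_space X" unfolding col_space_eq[OF X] using X by auto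
    thus "v \<in> ?S" unfolding col_space_def .
  qed
  have cX: "set (cols X) \<subseteq> carrier_vec n" using X cols_dim by (metis carrier_matD(1))
  have "vectorspace class_ring (vs ?S)" using span_is_subspace[THEN subspace_is_vs, OF cX] by auto
  have "submodule class_ring ?S V" using cX by (simp add: span_is_submodule)
  have sub: "VectorSpace.subspace class_ring (span (set (cols (X*Y)))) (vs ?S)"
    using vectorspace.span_is_subspace[OF \<open>vectorspace class_ring (vs ?S)\<close>, of "set (cols (X*Y))", unfolded
    span_li_not_depend(1)[OF \<open>set (cols (X*Y)) \<subseteq> ?S\<close> \<open>submodule class_ring ?S V\<close>]]
    \<open>set (cols (X*Y)) \<subseteq> ?S\<close> by auto
  have XY: "X * Y \<in> carrier_mat n m" using X Y by auto
  have fin_dim: "vectorspace.fin_dim class_ring (vs ?S)"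
       "vectorspace.fin_dim class_ring (vs ?S\<lparr>carrier := span (set (cols (X*Y)))\<rparr>)"
    using fin_dim_span_cols X XY by auto
  show ?thesis unfolding rank_def using "vectorspace.subspace_dim"[OF
    \<open>vectorspace class_ring (vs ?S)\<close> sub fin_dim(1) fin_dim(2)] by simp
qed

lemma (in vec_space) rank_mult_right_le:
  assumes X: "X \<in> carrier_mat n k" and Y: "Y \<in> carrier_mat k m"
  shows "rank (X * Y) \<le> vec_space.rank k Y"
proof -
  let ?C = "X * Y"
  have C: "?C \<in> carrier_mat n m" using X Y by auto
  obtain S where S: "maximal S (\<lambda>T. T \<subseteq> set (cols ?C) \<and> lin_indpt T)"
    using maximal_exists[of "(\<lambda>T. T \<subseteq> set (cols ?C) \<and> lin_indpt T)" "card (set (cols ?C))" "{}"]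
    by (meson List.finite_set card_mono empty_iff empty_subsetI finite_lin_indpt2 rev_finite_subset)
  have rk: "rank ?C = card S" by (rule rank_card_indpt[OF C S])
  have Ssub: "S \<subseteq> set (cols ?C)" and Sind: "lin_indpt S" using S unfolding maximal_def by auto
  define f where "f s = (SOME j. j < m \<and> col ?C j = s)" for s
  have f: "f s < m \<and> col ?C (f s) = s" if "s \<in> S" for s
  proof -
    from that Ssub obtain j where "j < m" "col ?C j = s" using C
      by (metis cols_length cols_nth in_set_conv_nth carrier_matD(2) subsetD)
    then show ?thesis unfolding f_def by (metis (mono_tags, lifting) someI)
  qed
  define J where "J = f ` S"
  have finS: "finite S" using Ssub finite_subset by auto
  have injf: "inj_on f S" using f by (metis inj_onI)
  define js where "js = sorted_list_of_set J"
  have finJ: "finite J" using finS J_def by auto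
  have js: "distinct js" "set js = J" "length js = card S"
    using finJ injf card_image[OF injf] unfolding js_def J_def by auto
  have Jm: "\<And>j. j \<in> set js \<Longrightarrow> j < m" using js(2) f unfolding J_def by auto
  define Ys where "Ys = mat_of_cols k (map (col Y) js)"
  define Cs where "Cs = mat_of_cols n (map (col ?C) js)"
  have Ys: "Ys \<in> carrier_mat k (length js)" unfolding Ys_def by auto
  have Cs: "Cs \<in> carrier_mat n (length js)" unfolding Cs_def by auto
  have colsYs: "cols Ys = map (col Y) js" unfolding Ys_def
  proof (rule cols_mat_of_cols)
    show "set (map (col Y) js) \<subseteq> carrier_vec k" using col_dim[of Y] Y by auto
  qed
  have colsCs: "cols Cs = map (col ?C) js" unfolding Cs_def
    proof (rule cols_mat_of_cols)
    show "set (map (col ?C) js) \<subseteq> carrier_vec n" using col_dim[of ?C] X by auto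
  qed
  have setCs: "set (cols Cs) = S"
  proof -
    have "set (cols Cs) = col ?C ` f ` S" unfolding colsCs using js(2) J_def by auto
    also have "\<dots> = (\<lambda>s. s) ` S" unfolding image_image by (rule image_cong, simp_all add: f)
    also have "\<dots> = S" by simp
    finally show ?thesis .
  qed
  have distCs: "distinct (cols Cs)" unfolding colsCs distinct_map
  proof
    show "distinct js" by (rule js(1))
    show "inj_on (col ?C) (set js)" unfolding js(2) J_def
    proof (rule inj_onI)
      fix a b assume "a \<in> f ` S" "b \<in> f ` S" "col ?C a = col ?C b"
      then obtain s1 s2 where "s1 \<in> S" "s2 \<in> S" "a = f s1" "b = f s2" by blast
      thus "a = b" using f \<open>col ?C a = col ?C b\<close> by metis
    qed
  qed
  have mapeq: "map (col ?C) js = map (\<lambda>j. X *\<^sub>v col Y j) js"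
    by (rule map_cong[OF refl], rule col_mult2[OF X Y], rule Jm)
  have "map (\<lambda>j. X *\<^sub>v col Y j) js = map ((*\<^sub>v) X) (map (col Y) js)" by simp
  hence distYs: "distinct (cols Ys)" using distCs unfolding colsCs colsYs mapeq
    using distinct_map[of "(*\<^sub>v) X" "map (col Y) js"] by (simp add: comp_def)
  have CsXYs: "Cs = X * Ys"
  proof (rule eq_matI)
    fix i j assume i: "i < dim_row (X * Ys)" and j: "j < dim_col (X * Ys)"
    hence i': "i < n" and j': "j < length js" using X Ys by auto
    have "Cs $$ (i,j) = col Cs j $ i" using i' j' Cs by auto
    also have "col Cs j = X *\<^sub>v col Y (js ! j)" using colsCs mapeq j' Cs
      by (metis cols_nth carrier_matD(2) length_map nth_map)
    also have "col Y (js ! j) = col Ys j" using colsYs j' Ys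
      by (metis cols_nth carrier_matD(2) nth_map)
    also have "(X *\<^sub>v col Ys j) $ i = (X * Ys) $$ (i,j)" using i' j' X Ys by auto
    finally show "Cs $$ (i,j) = (X * Ys) $$ (i,j)" .
  qed (use X Ys Cs in auto)
  have indYs: "\<not> LinearCombinations.module.lin_dep class_ring (module_vec TYPE('a) k) (set (cols Ys))"
  proof
    assume dep: "LinearCombinations.module.lin_dep class_ring (module_vec TYPE('a) k) (set (cols Ys))"
    obtain v where v: "v \<in> carrier_vec (length js)" "v \<noteq> 0\<^sub>v (length js)" "Ys *\<^sub>v v = 0\<^sub>v k"
      using vec_space.lin_depE[OF Ys dep distYs] by blast
    have "Cs *\<^sub>v v = X *\<^sub>v (Ys *\<^sub>v v)" unfolding CsXYs using X Ys v(1) by auto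
    also have "\<dots> = 0\<^sub>v n" unfolding v(3) using X by auto
    finally have "lin_dep (set (cols Cs))" by (rule lin_depI[OF Cs v(1) v(2) _ distCs])
    with setCs Sind show False by simp
  qed
  have "set (map (col Y) js) \<subseteq> set (cols Y)" using Jm Y by (auto simp: cols_def)
  hence sub: "set (cols Ys) \<subseteq> set (cols Y)" unfolding colsYs .
  have "card (set (cols Ys)) \<le> vec_space.rank k Y"
    by (rule vec_space.rank_ge_card_indpt[OF Y sub indYs])
  moreover have "card (set (cols Ys)) = card S" using distYs js(3) Ys
    by (simp add: distinct_card)
  ultimately show ?thesis using rk by simp
qed



lemma rank_sandwich:
  fixes M :: "'a::field mat"
  assumes S: "S \<in> carrier_mat n r" and S': "S' \<in> carrier_mat r n" and SS: "S' * S = 1\<^sub>m r"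
    and M: "M \<in> carrier_mat r r"
    and T: "T \<in> carrier_mat r n" and T': "T' \<in> carrier_mat n r" and TT: "T * T' = 1\<^sub>m r"
  shows "vec_space.rank n (S * M * T) = vec_space.rank r M"
proof (rule antisym)
  have "vec_space.rank n (S * M * T) \<le> vec_space.rank n (S * M)"
    by (rule vec_space.rank_mult_left_le[OF _ T], use S M in auto)
  also have "\<dots> \<le> vec_space.rank r M" by (rule vec_space.rank_mult_right_le[OF S M])
  finally show "vec_space.rank n (S * M * T) \<le> vec_space.rank r M" .
next
  have SMT: "S * M * T \<in> carrier_mat n n" using S M T by auto
  have "S' * (S * M * T) * T' = (S' * S) * M * (T * T')"
    using carrier_matD[OF S] carrier_matD[OF S'] carrier_matD[OF M] carrier_matD[OF T] carrier_matD[OF T']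
    by (simp add: massoc)
  also have "\<dots> = M" using SS TT M by simp
  finally have eq: "M = S' * (S * M * T) * T'" by simp
  have "vec_space.rank r M \<le> vec_space.rank r (S' * (S * M * T))"
    by (subst eq, rule vec_space.rank_mult_left_le[OF _ T'], use S' SMT in auto)
  also have "\<dots> \<le> vec_space.rank n (S * M * T)" by (rule vec_space.rank_mult_right_le[OF S' SMT])
  finally show "vec_space.rank r M \<le> vec_space.rank n (S * M * T)" .
qed

lemma rank_full_iff_inv: assumes M: "(M::complex mat) \<in> carrier_mat r r"
  shows "vec_space.rank r M = r \<longleftrightarrow> invertible_mat M"
  using vec_space.det_rank_iff[OF M] det_ne0_inv[OF M] by simp

lemma fb_triv: "M \<in> carrier_mat a b \<Longrightarrow> four_block_mat M (0\<^sub>m a 0) (0\<^sub>m 0 b) (0\<^sub>m 0 0) = M"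
  by (rule eq_matI, auto)

lemma mult_fb_left: assumes M: "(M::'a::semiring_1 mat) \<in> carrier_mat a b" and A: "A \<in> carrier_mat b c" and B: "B \<in> carrier_mat b d"
  shows "M * four_block_mat A B (0\<^sub>m 0 c) (0\<^sub>m 0 d) = four_block_mat (M*A) (M*B) (0\<^sub>m 0 c) (0\<^sub>m 0 d)"
proof -
  have "M * four_block_mat A B (0\<^sub>m 0 c) (0\<^sub>m 0 d) = four_block_mat M (0\<^sub>m a 0) (0\<^sub>m 0 b) (0\<^sub>m 0 0) * four_block_mat A B (0\<^sub>m 0 c) (0\<^sub>m 0 d)"
    using fb_triv[OF M] by simp
  also have "\<dots> = four_block_mat (M * A + 0\<^sub>m a 0 * 0\<^sub>m 0 c) (M * B + 0\<^sub>m a 0 * 0\<^sub>m 0 d)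
    (0\<^sub>m 0 b * A + 0\<^sub>m 0 0 * 0\<^sub>m 0 c) (0\<^sub>m 0 b * B + 0\<^sub>m 0 0 * 0\<^sub>m 0 d)"
    by (rule mult_four_block_mat, use M A B in auto)
  also have "\<dots> = four_block_mat (M*A) (M*B) (0\<^sub>m 0 c) (0\<^sub>m 0 d)"
    by (rule cong_four_block_mat, use M A B in auto)
  finally show ?thesis .
qed

lemma mult_fb_right: assumes A: "(A::'a::semiring_1 mat) \<in> carrier_mat a b" and C: "C \<in> carrier_mat c b" and M: "M \<in> carrier_mat b e"
  shows "four_block_mat A (0\<^sub>m a 0) C (0\<^sub>m c 0) * M = four_block_mat (A*M) (0\<^sub>m a 0) (C*M) (0\<^sub>m c 0)"
proof -
  have "four_block_mat A (0\<^sub>m a 0) C (0\<^sub>m c 0) * M = four_block_mat A (0\<^sub>m a 0) C (0\<^sub>m c 0) * four_block_mat M (0\<^sub>m b 0) (0\<^sub>m 0 e) (0\<^sub>m 0 0)"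
    using fb_triv[OF M] by simp
  also have "\<dots> = four_block_mat (A * M + 0\<^sub>m a 0 * 0\<^sub>m 0 e) (A * 0\<^sub>m b 0 + 0\<^sub>m a 0 * 0\<^sub>m 0 0)
    (C * M + 0\<^sub>m c 0 * 0\<^sub>m 0 e) (C * 0\<^sub>m b 0 + 0\<^sub>m c 0 * 0\<^sub>m 0 0)"
    by (rule mult_four_block_mat, use M A C in auto)
  also have "\<dots> = four_block_mat (A*M) (0\<^sub>m a 0) (C*M) (0\<^sub>m c 0)"
    by (rule cong_four_block_mat, use M A C in auto)
  finally show ?thesis .
qed

lemma mink_adj_sq: "A \<in> carrier_mat n n \<Longrightarrow> mink_adj A = mink_G n * mat_adjoint A * mink_G n"
  unfolding mink_adj_def by auto

lemma mink_adj_mult: assumes A: "A \<in> carrier_mat n n" and B: "B \<in> carrier_mat n n"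
  shows "mink_adj (A * B) = mink_adj B * mink_adj A"
proof -
  have G: "mink_G n \<in> carrier_mat n n" by (rule carrier_matI, auto)
  have AB: "A * B \<in> carrier_mat n n" using A B by simp
  have "mink_adj (A * B) = mink_G n * (mat_adjoint B * mat_adjoint A) * mink_G n"
    unfolding mink_adj_sq[OF AB] using A B by (simp add: adj_mult)
  also have "\<dots> = mink_G n * mat_adjoint B * (mink_G n * mink_G n) * mat_adjoint A * mink_G n"
    using A B G by (simp add: mink_G_sq massoc one_l)
  also have "\<dots> = mink_adj B * mink_adj A" using A B G by (simp add: mink_adj_sq massoc)
  finally show ?thesis .
qed

lemma mink_inv_unique: assumes A: "A \<in> carrier_mat n n" and X: "is_mink_inv A X" and Y: "is_mink_inv A Y"
  shows "X = Y"
proof -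
  let ?a = mink_adj
  have Xc: "X \<in> carrier_mat n n" and Yc: "Y \<in> carrier_mat n n" using X Y A unfolding is_mink_inv_def by auto
  note XX = X[unfolded is_mink_inv_def] and YY = Y[unfolded is_mink_inv_def]
  have ac: "\<And>M. M \<in> carrier_mat n n \<Longrightarrow> ?a M \<in> carrier_mat n n"
    by (rule carrier_matI, auto simp: mink_adj_def)
  have c: "A \<in> carrier_mat n n" "X \<in> carrier_mat n n" "Y \<in> carrier_mat n n" "?a A \<in> carrier_mat n n"
    "?a X \<in> carrier_mat n n" "?a Y \<in> carrier_mat n n" using A Xc Yc ac by auto
  note d = carrier_matD[OF c(1)] carrier_matD[OF c(2)] carrier_matD[OF c(3)] carrier_matD[OF c(4)]
    carrier_matD[OF c(5)] carrier_matD[OF c(6)]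
  note ma = mink_adj_mult[OF A Xc] mink_adj_mult[OF A Yc] mink_adj_mult[OF Xc A] mink_adj_mult[OF Yc A]
  have "X = X * A * X" using XX by simp
  also have "\<dots> = X * (A * X)" using d by (simp add: massoc)
  also have "\<dots> = X * ?a (A * X)" using XX by simp
  also have "\<dots> = X * (?a X * ?a A)" using ma by simp
  also have "?a A = ?a (A * Y * A)" using YY by simp
  also have "\<dots> = ?a (A * (Y * A))" using d by (simp add: massoc)
  also have "\<dots> = ?a (Y * A) * ?a A" using mink_adj_mult[OF A, of "Y * A"] c by simp
  also have "?a (Y * A) = ?a A * ?a Y" using ma by simp
  also have "X * (?a X * (?a A * ?a Y * ?a A)) = X * ((?a X * ?a A) * (?a Y * ?a A))" using d by (simp add: massoc)
  also have "\<dots> = X * (?a (A * X) * ?a (A * Y))" using ma by simp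
  also have "\<dots> = X * ((A * X) * (A * Y))" using XX YY by simp
  also have "\<dots> = (X * A * X) * A * Y" using d by (simp add: massoc)
  also have "\<dots> = X * A * Y" using XX by simp
  finally have 1: "X = X * A * Y" .
  have "Y = Y * A * Y" using YY by simp
  also have "\<dots> = ?a (Y * A) * Y" using YY by simp
  also have "\<dots> = (?a A * ?a Y) * Y" using ma by simp
  also have "?a A = ?a (A * X * A)" using XX by simp
  also have "\<dots> = ?a A * ?a (A * X)" using mink_adj_mult[OF _ A, of "A * X"] c by simp
  also have "?a (A * X) = ?a X * ?a A" using ma by simp
  also have "(?a A * (?a X * ?a A) * ?a Y) * Y = ((?a A * ?a X) * (?a A * ?a Y)) * Y" using d by (simp add: massoc)
  also have "\<dots> = (?a (X * A) * ?a (Y * A)) * Y" using ma by simp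
  also have "\<dots> = ((X * A) * (Y * A)) * Y" using XX YY by simp
  also have "\<dots> = X * A * (Y * A * Y)" using d by (simp add: massoc)
  also have "\<dots> = X * A * Y" using YY by simp
  finally show ?thesis using 1 by simp
qed



lemma canc: assumes "dim_col X = dim_row Y" "dim_col Y = dim_row (Z::'a::semiring_1 mat)" "X * Y = 1\<^sub>m k"
  shows "X * (Y * Z) = Z"
proof -
  have "X * (Y * Z) = X * Y * Z" by (rule massoc[symmetric], use assms in auto)
  also have "\<dots> = 1\<^sub>m k * Z" using assms by simp
  also have "dim_row Z = k" using assms(2) arg_cong[OF assms(3), of dim_col] by simp
  hence "1\<^sub>m k * Z = Z" by (rule one_l)
  finally show ?thesis .
qed

theorem theorem7p1:
  fixes n r :: nat and A U K L G1 G2 G3 G4 :: "complex mat" and \<sigma> :: "nat \<Rightarrow> real"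
  assumes rn: "r \<le> n"
    and A: "A \<in> carrier_mat n n" and rankA: "vec_space.rank n A = r"
    and U: "unitary_mat n U"
    and \<sigma>: "\<And>i. i < r \<Longrightarrow> \<sigma> i > 0"
    and K: "K \<in> carrier_mat r r" and L: "L \<in> carrier_mat r (n - r)"
    and KL: "K * mat_adjoint K + L * mat_adjoint L = 1\<^sub>m r"
    and \<Sigma>_def: "\<Sigma> \<equiv> mat_diag r (\<lambda>i. complex_of_real (\<sigma> i))"
    and HS: "A = U * four_block_mat (\<Sigma> * K) (\<Sigma> * L) (0\<^sub>m (n - r) r) (0\<^sub>m (n - r) (n - r)) * mat_adjoint U"
    and G1: "G1 \<in> carrier_mat r r" and G2: "G2 \<in> carrier_mat r (n - r)"
    and G3: "G3 \<in> carrier_mat (n - r) r" and G4: "G4 \<in> carrier_mat (n - r) (n - r)"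
    and Gblk: "four_block_mat G1 G2 G3 G4 = mat_adjoint U * mink_G n * U"
    and \<Delta>_def: "\<Delta> \<equiv> four_block_mat K L (0\<^sub>m 0 r) (0\<^sub>m 0 (n - r)) * (mat_adjoint U * mink_G n * U)
                    * four_block_mat (mat_adjoint K) (0\<^sub>m r 0) (mat_adjoint L) (0\<^sub>m (n - r) 0)"
  shows "(vec_space.rank n A = vec_space.rank n (A * mink_adj A) \<longleftrightarrow> invertible_mat \<Delta>)
    \<and> (vec_space.rank n A = vec_space.rank n (mink_adj A * A) \<longleftrightarrow> invertible_mat G1)
    \<and> (invertible_mat \<Delta> \<and> invertible_mat G1 \<longrightarrow>
         is_mink_inv A (mink_inv A)
       \<and> mink_inv A = mink_G n * U * four_block_mat
              (mat_adjoint K * mat_inv (G1 * \<Sigma> * \<Delta>)) (0\<^sub>m r (n - r))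
              (mat_adjoint L * mat_inv (G1 * \<Sigma> * \<Delta>)) (0\<^sub>m (n - r) (n - r))
              * mat_adjoint U * mink_G n
       \<and> mink_inv A = U * four_block_mat
              ((G1 * mat_adjoint K + G2 * mat_adjoint L) * mat_inv (\<Sigma> * \<Delta>))
              ((G1 * mat_adjoint K + G2 * mat_adjoint L) * mat_inv (G1 * \<Sigma> * \<Delta>) * G2)
              ((G3 * mat_adjoint K + G4 * mat_adjoint L) * mat_inv (\<Sigma> * \<Delta>))
              ((G3 * mat_adjoint K + G4 * mat_adjoint L) * mat_inv (G1 * \<Sigma> * \<Delta>) * G2)
              * mat_adjoint U)"
proof -
  define Gn where "Gn = mink_G n"
  define Uh where "Uh = mat_adjoint U"
  define W where "W = Uh * Gn * U"
  define E :: "complex mat" where "E = four_block_mat (1\<^sub>m r) (0\<^sub>m r 0) (0\<^sub>m (n-r) r) (0\<^sub>m (n-r) 0)"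
  define P where "P = four_block_mat K L (0\<^sub>m 0 r) (0\<^sub>m 0 (n-r))"
  define Eh where "Eh = mat_adjoint E"
  define Ph where "Ph = mat_adjoint P"
  define Kh where "Kh = mat_adjoint K"
  define Lh where "Lh = mat_adjoint L"
  have nr: "r + (n - r) = n" using rn by simp
  have Uc: "U \<in> carrier_mat n n" and UUh: "U * Uh = 1\<^sub>m n" and UhU: "Uh * U = 1\<^sub>m n"
    using U unfolding unitary_mat_def Uh_def by auto
  have Uhc: "Uh \<in> carrier_mat n n" unfolding Uh_def using Uc by simp
  have Gc: "Gn \<in> carrier_mat n n" unfolding Gn_def by (rule carrier_matI, auto)
  have GG: "Gn * Gn = 1\<^sub>m n" unfolding Gn_def by (rule mink_G_sq)
  have GH: "mat_adjoint Gn = Gn" unfolding Gn_def by simp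
  have Sc: "\<Sigma> \<in> carrier_mat r r" unfolding \<Sigma>_def by simp
  have Ec: "E \<in> carrier_mat n r" unfolding E_def using four_block_carrier_mat[of "1\<^sub>m r" r r "0\<^sub>m (n-r) 0" "n-r" 0] nr by simp
  have Pc: "P \<in> carrier_mat r n" unfolding P_def using four_block_carrier_mat[of K r r "0\<^sub>m 0 (n-r)" 0 "n-r"] K nr by simp
  have Ehc: "Eh \<in> carrier_mat r n" unfolding Eh_def using Ec by simp
  have Phc: "Ph \<in> carrier_mat n r" unfolding Ph_def using Pc by simp
  have Khc: "Kh \<in> carrier_mat r r" unfolding Kh_def using K by simp
  have Lhc: "Lh \<in> carrier_mat (n - r) r" unfolding Lh_def using L by simp
  have Wc: "W \<in> carrier_mat n n" unfolding W_def using Uc Uhc Gc by simp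
  have Wblk: "W = four_block_mat G1 G2 G3 G4" unfolding W_def Uh_def Gn_def using Gblk by simp
  have Ph_eq: "Ph = four_block_mat Kh (0\<^sub>m r 0) Lh (0\<^sub>m (n - r) 0)"
    unfolding Ph_def P_def Kh_def Lh_def using K L by (subst adj_four_block, auto)
  have Eh_eq: "Eh = four_block_mat (1\<^sub>m r) (0\<^sub>m r (n-r)) (0\<^sub>m 0 r) (0\<^sub>m 0 (n-r))"
    unfolding Eh_def E_def by (subst adj_four_block, auto)
  have Dl: "\<Delta> = P * W * Ph" unfolding \<Delta>_def P_def W_def Ph_eq Kh_def Lh_def Uh_def Gn_def ..
  have Dc: "\<Delta> \<in> carrier_mat r r" unfolding Dl using Pc Wc Phc by simp
  note D = carrier_matD[OF Uc] carrier_matD[OF Uhc] carrier_matD[OF Gc] carrier_matD[OF Sc]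
    carrier_matD[OF Ec] carrier_matD[OF Pc] carrier_matD[OF Ehc] carrier_matD[OF Phc]
    carrier_matD[OF Khc] carrier_matD[OF Lhc] carrier_matD[OF Wc] carrier_matD[OF Dc]
    carrier_matD[OF K] carrier_matD[OF L] carrier_matD[OF G1] carrier_matD[OF G2]
    carrier_matD[OF G3] carrier_matD[OF G4] carrier_matD[OF A]
  have PPh: "P * Ph = 1\<^sub>m r"
  proof -
    have "P * Ph = four_block_mat (K * Kh + L * Lh) (K * 0\<^sub>m r 0 + L * 0\<^sub>m (n - r) 0)
      (0\<^sub>m 0 r * Kh + 0\<^sub>m 0 (n - r) * Lh) (0\<^sub>m 0 r * 0\<^sub>m r 0 + 0\<^sub>m 0 (n - r) * 0\<^sub>m (n - r) 0)"
      unfolding P_def Ph_eq by (rule mult_four_block_mat, use K L Khc Lhc in auto)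
    also have "\<dots> = four_block_mat (1\<^sub>m r) (0\<^sub>m r 0) (0\<^sub>m 0 r) (0\<^sub>m 0 0)"
      using KL K L Khc Lhc unfolding Kh_def Lh_def by (intro cong_four_block_mat, auto)
    also have "\<dots> = 1\<^sub>m r" by (rule eq_matI, auto)
    finally show ?thesis .
  qed
  have EhE: "Eh * E = 1\<^sub>m r"
  proof -
    have "Eh * E = four_block_mat (1\<^sub>m r * 1\<^sub>m r + 0\<^sub>m r (n-r) * 0\<^sub>m (n - r) r) (1\<^sub>m r * 0\<^sub>m r 0 + 0\<^sub>m r (n-r) * 0\<^sub>m (n - r) 0)
      (0\<^sub>m 0 r * 1\<^sub>m r + 0\<^sub>m 0 (n - r) * 0\<^sub>m (n - r) r) (0\<^sub>m 0 r * 0\<^sub>m r 0 + 0\<^sub>m 0 (n - r) * 0\<^sub>m (n - r) 0)"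
      unfolding E_def Eh_eq by (rule mult_four_block_mat, auto)
    also have "\<dots> = four_block_mat (1\<^sub>m r) (0\<^sub>m r 0) (0\<^sub>m 0 r) (0\<^sub>m 0 0)"
      by (intro cong_four_block_mat, auto)
    also have "\<dots> = 1\<^sub>m r" by (rule eq_matI, auto)
    finally show ?thesis .
  qed
  have EhW: "Eh * W = four_block_mat G1 G2 (0\<^sub>m 0 r) (0\<^sub>m 0 (n-r))"
  proof -
    have "Eh * W = four_block_mat (1\<^sub>m r * G1 + 0\<^sub>m r (n-r) * G3) (1\<^sub>m r * G2 + 0\<^sub>m r (n-r) * G4)
      (0\<^sub>m 0 r * G1 + 0\<^sub>m 0 (n - r) * G3) (0\<^sub>m 0 r * G2 + 0\<^sub>m 0 (n - r) * G4)"
      unfolding Wblk Eh_eq by (rule mult_four_block_mat, use G1 G2 G3 G4 in auto)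
    also have "\<dots> = four_block_mat G1 G2 (0\<^sub>m 0 r) (0\<^sub>m 0 (n-r))"
      using G1 G2 G3 G4 by (intro cong_four_block_mat, auto)
    finally show ?thesis .
  qed
  have EhWE: "Eh * W * E = G1"
  proof -
    have "Eh * W * E = four_block_mat (G1 * 1\<^sub>m r + G2 * 0\<^sub>m (n - r) r) (G1 * 0\<^sub>m r 0 + G2 * 0\<^sub>m (n - r) 0)
      (0\<^sub>m 0 r * 1\<^sub>m r + 0\<^sub>m 0 (n - r) * 0\<^sub>m (n - r) r) (0\<^sub>m 0 r * 0\<^sub>m r 0 + 0\<^sub>m 0 (n - r) * 0\<^sub>m (n - r) 0)"
      unfolding EhW E_def by (rule mult_four_block_mat, use G1 G2 in auto)
    also have "\<dots> = four_block_mat G1 (0\<^sub>m r 0) (0\<^sub>m 0 r) (0\<^sub>m 0 0)"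
      using G1 G2 by (intro cong_four_block_mat, auto)
    also have "\<dots> = G1" by (rule fb_triv[OF G1])
    finally show ?thesis .
  qed
  define H1 where "H1 = G1 * Kh + G2 * Lh"
  define H3 where "H3 = G3 * Kh + G4 * Lh"
  have H1c: "H1 \<in> carrier_mat r r" unfolding H1_def using G1 G2 Khc Lhc by simp
  have H3c: "H3 \<in> carrier_mat (n - r) r" unfolding H3_def using G3 G4 Khc Lhc by simp
  have WPh: "W * Ph = four_block_mat H1 (0\<^sub>m r 0) H3 (0\<^sub>m (n - r) 0)"
  proof -
    have "W * Ph = four_block_mat (G1 * Kh + G2 * Lh) (G1 * 0\<^sub>m r 0 + G2 * 0\<^sub>m (n - r) 0)
      (G3 * Kh + G4 * Lh) (G3 * 0\<^sub>m r 0 + G4 * 0\<^sub>m (n - r) 0)"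
      unfolding Wblk Ph_eq by (rule mult_four_block_mat, use G1 G2 G3 G4 Khc Lhc in auto)
    also have "\<dots> = four_block_mat H1 (0\<^sub>m r 0) H3 (0\<^sub>m (n - r) 0)"
      unfolding H1_def H3_def using G1 G2 G3 G4 by (intro cong_four_block_mat, auto)
    finally show ?thesis .
  qed
  have FA: "four_block_mat (\<Sigma> * K) (\<Sigma> * L) (0\<^sub>m (n - r) r) (0\<^sub>m (n - r) (n - r)) = E * (\<Sigma> * P)"
  proof -
    have SP: "\<Sigma> * P = four_block_mat (\<Sigma> * K) (\<Sigma> * L) (0\<^sub>m 0 r) (0\<^sub>m 0 (n-r))"
      unfolding P_def by (rule mult_fb_left[OF Sc K L])
    have "E * (\<Sigma> * P) = four_block_mat (1\<^sub>m r * (\<Sigma> * K) + 0\<^sub>m r 0 * 0\<^sub>m 0 r) (1\<^sub>m r * (\<Sigma> * L) + 0\<^sub>m r 0 * 0\<^sub>m 0 (n-r))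
      (0\<^sub>m (n - r) r * (\<Sigma> * K) + 0\<^sub>m (n - r) 0 * 0\<^sub>m 0 r) (0\<^sub>m (n - r) r * (\<Sigma> * L) + 0\<^sub>m (n - r) 0 * 0\<^sub>m 0 (n-r))"
      unfolding SP E_def by (rule mult_four_block_mat, use Sc K L in auto)
    also have "\<dots> = four_block_mat (\<Sigma> * K) (\<Sigma> * L) (0\<^sub>m (n - r) r) (0\<^sub>m (n - r) (n - r))"
      using Sc K L by (intro cong_four_block_mat, auto)
    finally show ?thesis by simp
  qed
  have FX: "\<And>Z::complex mat. Z \<in> carrier_mat r r \<Longrightarrow> four_block_mat (mat_adjoint K * Z) (0\<^sub>m r (n - r)) (mat_adjoint L * Z) (0\<^sub>m (n - r) (n - r)) = Ph * Z * Eh"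
  proof -
    fix Z :: "complex mat" assume Z: "Z \<in> carrier_mat r r"
    have PZ: "Ph * Z = four_block_mat (Kh * Z) (0\<^sub>m r 0) (Lh * Z) (0\<^sub>m (n - r) 0)"
      unfolding Ph_eq by (rule mult_fb_right[OF Khc Lhc Z])
    have "Ph * Z * Eh = four_block_mat (Kh * Z * 1\<^sub>m r + 0\<^sub>m r 0 * 0\<^sub>m 0 r) (Kh * Z * 0\<^sub>m r (n-r) + 0\<^sub>m r 0 * 0\<^sub>m 0 (n-r))
      (Lh * Z * 1\<^sub>m r + 0\<^sub>m (n - r) 0 * 0\<^sub>m 0 r) (Lh * Z * 0\<^sub>m r (n-r) + 0\<^sub>m (n - r) 0 * 0\<^sub>m 0 (n-r))"
      unfolding PZ Eh_eq by (rule mult_four_block_mat, use Khc Lhc Z in auto)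
    also have "\<dots> = four_block_mat (mat_adjoint K * Z) (0\<^sub>m r (n - r)) (mat_adjoint L * Z) (0\<^sub>m (n - r) (n - r))"
      unfolding Kh_def Lh_def using K L Z by (intro cong_four_block_mat, auto)
    finally show "four_block_mat (mat_adjoint K * Z) (0\<^sub>m r (n - r)) (mat_adjoint L * Z) (0\<^sub>m (n - r) (n - r)) = Ph * Z * Eh" by simp
  qed
  have F6: "\<And>Y::complex mat. Y \<in> carrier_mat r r \<Longrightarrow> W * Ph * Y * (Eh * W) = four_block_mat (H1 * Y * G1) (H1 * Y * G2) (H3 * Y * G1) (H3 * Y * G2)"
  proof -
    fix Y :: "complex mat" assume Y: "Y \<in> carrier_mat r r"
    have PY: "W * Ph * Y = four_block_mat (H1 * Y) (0\<^sub>m r 0) (H3 * Y) (0\<^sub>m (n - r) 0)"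
      unfolding WPh by (rule mult_fb_right[OF H1c H3c Y])
    have "W * Ph * Y * (Eh * W) = four_block_mat (H1 * Y * G1 + 0\<^sub>m r 0 * 0\<^sub>m 0 r) (H1 * Y * G2 + 0\<^sub>m r 0 * 0\<^sub>m 0 (n-r))
      (H3 * Y * G1 + 0\<^sub>m (n - r) 0 * 0\<^sub>m 0 r) (H3 * Y * G2 + 0\<^sub>m (n - r) 0 * 0\<^sub>m 0 (n-r))"
      unfolding PY EhW by (rule mult_four_block_mat, use H1c H3c Y G1 G2 in auto)
    also have "\<dots> = four_block_mat (H1 * Y * G1) (H1 * Y * G2) (H3 * Y * G1) (H3 * Y * G2)"
      using H1c H3c Y G1 G2 by (intro cong_four_block_mat, auto)
    finally show "W * Ph * Y * (Eh * W) = four_block_mat (H1 * Y * G1) (H1 * Y * G2) (H3 * Y * G1) (H3 * Y * G2)" .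
  qed
  have SH: "mat_adjoint \<Sigma> = \<Sigma>" unfolding \<Sigma>_def by (rule eq_matI, auto simp: mat_diag_def)
  have detS: "det \<Sigma> \<noteq> 0"
  proof -
    have "\<Sigma> * mat_diag r (\<lambda>i. complex_of_real (1 / \<sigma> i)) = mat_diag r (\<lambda>i. complex_of_real (\<sigma> i) * complex_of_real (1 / \<sigma> i))"
      unfolding \<Sigma>_def by simp
    also have "\<dots> = 1\<^sub>m r"
    proof (rule eq_matI)
      fix i j assume "i < dim_row (1\<^sub>m r :: complex mat)" "j < dim_col (1\<^sub>m r :: complex mat)"
      hence ij: "i < r" "j < r" by auto
      hence "\<sigma> j > 0" using \<sigma> by auto
      thus "mat_diag r (\<lambda>i. complex_of_real (\<sigma> i) * complex_of_real (1 / \<sigma> i)) $$ (i, j) = 1\<^sub>m r $$ (i, j)"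
        using ij by (auto simp: mat_diag_def simp flip: of_real_mult)
    qed (auto simp: mat_diag_def)
    finally have "det \<Sigma> * det (mat_diag r (\<lambda>i. complex_of_real (1 / \<sigma> i))) = 1"
      using det_mult[OF Sc mat_diag_dim[of r "\<lambda>i. complex_of_real (1 / \<sigma> i)"]] by simp
    thus ?thesis by auto
  qed
  have UhH: "mat_adjoint Uh = U" unfolding Uh_def by simp
  have madj: "mink_adj A = Gn * mat_adjoint A * Gn" unfolding Gn_def by (rule mink_adj_sq[OF A])
  have cU1: "\<And>Z. dim_row Z = n \<Longrightarrow> Uh * (U * Z) = Z" using canc[OF _ _ UhU] D by simp
  have cU2: "\<And>Z. dim_row Z = n \<Longrightarrow> U * (Uh * Z) = Z" using canc[OF _ _ UUh] D by simp
  have cG: "\<And>Z. dim_row Z = n \<Longrightarrow> Gn * (Gn * Z) = Z" using canc[OF _ _ GG] D by simp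
  have cP: "\<And>Z. dim_row Z = r \<Longrightarrow> P * (Ph * Z) = Z" using canc[OF _ _ PPh] D by simp
  have cE: "\<And>Z. dim_row Z = r \<Longrightarrow> Eh * (E * Z) = Z" using canc[OF _ _ EhE] D by simp
  have cG1: "\<And>Z. dim_row Z = r \<Longrightarrow> Eh * (Uh * (Gn * (U * (E * Z)))) = G1 * Z"
  proof -
    fix Z :: "complex mat" assume "dim_row Z = r"
    hence "Eh * (Uh * (Gn * (U * (E * Z)))) = (Eh * W * E) * Z" unfolding W_def using D by (simp add: massoc)
    thus "Eh * (Uh * (Gn * (U * (E * Z)))) = G1 * Z" unfolding EhWE .
  qed
  have cD: "\<And>Z. dim_row Z = r \<Longrightarrow> P * (Uh * (Gn * (U * (Ph * Z)))) = \<Delta> * Z"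
  proof -
    fix Z :: "complex mat" assume "dim_row Z = r"
    thus "P * (Uh * (Gn * (U * (Ph * Z)))) = \<Delta> * Z" unfolding Dl W_def using D by (simp add: massoc)
  qed
  note N = massoc D cU1 cU2 cG cP cE cG1 cD UhU UUh GG PPh EhE one_l one_r
  have A_eq: "A = U * (E * (\<Sigma> * (P * Uh)))" using HS FA D unfolding Uh_def by (simp add: massoc)
  have Ah: "mat_adjoint A = U * (Ph * (\<Sigma> * (Eh * Uh)))"
    unfolding A_eq using D by (simp add: adj_mult massoc SH UhH Ph_def[symmetric] Eh_def[symmetric] Uh_def[symmetric])
  have AAm: "A * mink_adj A = (U * E) * (\<Sigma> * \<Delta> * \<Sigma>) * (Eh * Uh * Gn)"
    unfolding madj Ah by (subst A_eq, simp add: N)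
  have AmA: "mink_adj A * A = (Gn * U * Ph) * (\<Sigma> * G1 * \<Sigma>) * (P * Uh)"
    unfolding madj Ah by (subst A_eq, simp add: N)
  have r1: "vec_space.rank n (A * mink_adj A) = vec_space.rank r (\<Sigma> * \<Delta> * \<Sigma>)"
    unfolding AAm by (rule rank_sandwich[where S'="Eh * Uh" and T'="Gn * U * E"], use Uc Ec Ehc Uhc Gc Sc Dc in simp_all, simp_all add: N)
  have r2: "vec_space.rank n (mink_adj A * A) = vec_space.rank r (\<Sigma> * G1 * \<Sigma>)"
    unfolding AmA by (rule rank_sandwich[where S'="P * Uh * Gn" and T'="U * Ph"], use Uc Phc Pc Uhc Gc Sc G1 in simp_all, simp_all add: N)
  have SDS: "\<Sigma> * \<Delta> * \<Sigma> \<in> carrier_mat r r" using Sc Dc by simp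
  have SGS: "\<Sigma> * G1 * \<Sigma> \<in> carrier_mat r r" using Sc G1 by simp
  have invD: "invertible_mat \<Delta> \<longleftrightarrow> det \<Delta> \<noteq> 0" by (rule det_ne0_inv[OF Dc])
  have invG1: "invertible_mat G1 \<longleftrightarrow> det G1 \<noteq> 0" by (rule det_ne0_inv[OF G1])
  have P1: "vec_space.rank n A = vec_space.rank n (A * mink_adj A) \<longleftrightarrow> invertible_mat \<Delta>"
  proof -
    have "vec_space.rank n A = vec_space.rank n (A * mink_adj A) \<longleftrightarrow> vec_space.rank r (\<Sigma> * \<Delta> * \<Sigma>) = r"
      using r1 rankA by auto
    also have "\<dots> \<longleftrightarrow> det (\<Sigma> * \<Delta> * \<Sigma>) \<noteq> 0" using rank_full_iff_inv[OF SDS] det_ne0_inv[OF SDS] by simp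
    also have "det (\<Sigma> * \<Delta> * \<Sigma>) = det \<Sigma> * det \<Delta> * det \<Sigma>" using Sc Dc by (simp add: det_mult)
    finally show ?thesis using detS invD by simp
  qed
  have P2: "vec_space.rank n A = vec_space.rank n (mink_adj A * A) \<longleftrightarrow> invertible_mat G1"
  proof -
    have "vec_space.rank n A = vec_space.rank n (mink_adj A * A) \<longleftrightarrow> vec_space.rank r (\<Sigma> * G1 * \<Sigma>) = r"
      using r2 rankA by auto
    also have "\<dots> \<longleftrightarrow> det (\<Sigma> * G1 * \<Sigma>) \<noteq> 0" using rank_full_iff_inv[OF SGS] det_ne0_inv[OF SGS] by simp
    also have "det (\<Sigma> * G1 * \<Sigma>) = det \<Sigma> * det G1 * det \<Sigma>" using Sc G1 by (simp add: det_mult)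
    finally show ?thesis using detS invG1 by simp
  qed
  have WH: "mat_adjoint W = W" unfolding W_def using D by (simp add: adj_mult massoc GH UhH Uh_def[symmetric])
  have EhH: "mat_adjoint Eh = E" unfolding Eh_def by simp
  have PhH: "mat_adjoint Ph = P" unfolding Ph_def by simp
  have G1H: "mat_adjoint G1 = G1"
  proof -
    have "mat_adjoint G1 = mat_adjoint (Eh * W * E)" unfolding EhWE ..
    also have "\<dots> = Eh * W * E" using D by (simp add: adj_mult massoc WH EhH Eh_def[symmetric])
    finally show ?thesis unfolding EhWE .
  qed
  have DH: "mat_adjoint \<Delta> = \<Delta>" unfolding Dl using D by (simp add: adj_mult massoc WH PhH Ph_def[symmetric])
  have P3: "invertible_mat \<Delta> \<and> invertible_mat G1 \<longrightarrow>
         is_mink_inv A (mink_inv A)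
       \<and> mink_inv A = mink_G n * U * four_block_mat
              (mat_adjoint K * mat_inv (G1 * \<Sigma> * \<Delta>)) (0\<^sub>m r (n - r))
              (mat_adjoint L * mat_inv (G1 * \<Sigma> * \<Delta>)) (0\<^sub>m (n - r) (n - r))
              * mat_adjoint U * mink_G n
       \<and> mink_inv A = U * four_block_mat
              ((G1 * mat_adjoint K + G2 * mat_adjoint L) * mat_inv (\<Sigma> * \<Delta>))
              ((G1 * mat_adjoint K + G2 * mat_adjoint L) * mat_inv (G1 * \<Sigma> * \<Delta>) * G2)
              ((G3 * mat_adjoint K + G4 * mat_adjoint L) * mat_inv (\<Sigma> * \<Delta>))
              ((G3 * mat_adjoint K + G4 * mat_adjoint L) * mat_inv (G1 * \<Sigma> * \<Delta>) * G2)
              * mat_adjoint U"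
  proof
    assume "invertible_mat \<Delta> \<and> invertible_mat G1"
    hence iD: "invertible_mat \<Delta>" and iG: "invertible_mat G1" by auto
    define Z where "Z = G1 * \<Sigma> * \<Delta>"
    define SD where "SD = \<Sigma> * \<Delta>"
    have Zc: "Z \<in> carrier_mat r r" unfolding Z_def using G1 Sc Dc by simp
    have SDc: "SD \<in> carrier_mat r r" unfolding SD_def using Sc Dc by simp
    have dD: "det \<Delta> \<noteq> 0" and dG: "det G1 \<noteq> 0" using iD iG invD invG1 by auto
    have "det Z \<noteq> 0" unfolding Z_def using G1 Sc Dc dD dG detS by (simp add: det_mult)
    hence iZ: "invertible_mat Z" using det_ne0_inv[OF Zc] by simp
    have "det SD \<noteq> 0" unfolding SD_def using Sc Dc dD detS by (simp add: det_mult)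
    hence iSD: "invertible_mat SD" using det_ne0_inv[OF SDc] by simp
    define Zi where "Zi = mat_inv Z"
    define G1i where "G1i = mat_inv G1"
    define Di where "Di = mat_inv \<Delta>"
    define SDi where "SDi = mat_inv SD"
    note Zi = mat_inv_props[OF Zc iZ, folded Zi_def]
    note G1i = mat_inv_props[OF G1 iG, folded G1i_def]
    note Di = mat_inv_props[OF Dc iD, folded Di_def]
    note D2 = carrier_matD[OF Zi(1)] carrier_matD[OF G1i(1)] carrier_matD[OF Di(1)]
    have cG1i: "\<And>X. dim_row X = r \<Longrightarrow> G1i * (G1 * X) = X" using canc[OF _ _ G1i(3)] D D2 by simp
    have cDi: "\<And>X. dim_row X = r \<Longrightarrow> Di * (\<Delta> * X) = X" using canc[OF _ _ Di(3)] D D2 by simp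
    have z1: "\<Sigma> * (\<Delta> * Zi) = G1i"
    proof -
      have "G1 * (\<Sigma> * (\<Delta> * Zi)) = Z * Zi" unfolding Z_def using D D2 by (simp add: massoc)
      hence "G1 * (\<Sigma> * (\<Delta> * Zi)) = 1\<^sub>m r" using Zi by simp
      hence "G1i * (G1 * (\<Sigma> * (\<Delta> * Zi))) = G1i" using G1i by simp
      thus ?thesis using cG1i D D2 by simp
    qed
    have z1': "\<And>X. dim_row X = r \<Longrightarrow> \<Sigma> * (\<Delta> * (Zi * X)) = G1i * X"
      using z1 D D2 by (simp add: massoc[symmetric])
    have z2: "Zi * (G1 * \<Sigma>) = Di" unfolding Di_def
    proof (rule left_inv_eq[OF Dc iD])
      show "Zi * (G1 * \<Sigma>) \<in> carrier_mat r r" using Zi G1 Sc by simp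
      have "Zi * (G1 * \<Sigma>) * \<Delta> = Zi * Z" unfolding Z_def using D D2 by (simp add: massoc)
      thus "Zi * (G1 * \<Sigma>) * \<Delta> = 1\<^sub>m r" using Zi by simp
    qed
    have z2': "\<And>X. dim_row X = r \<Longrightarrow> Zi * (G1 * (\<Sigma> * X)) = Di * X"
      using z2 D D2 by (simp add: massoc[symmetric])
    have z3: "Zi * G1 = SDi" unfolding SDi_def
    proof (rule left_inv_eq[OF SDc iSD])
      show "Zi * G1 \<in> carrier_mat r r" using Zi G1 by simp
      have "Zi * G1 * SD = Zi * Z" unfolding Z_def SD_def using D D2 by (simp add: massoc)
      thus "Zi * G1 * SD = 1\<^sub>m r" using Zi by simp
    qed
    have G1iH: "mat_adjoint G1i = G1i"
    proof (rule left_inv_eq[OF G1 iG, folded G1i_def])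
      show "mat_adjoint G1i \<in> carrier_mat r r" using G1i by simp
      have "mat_adjoint G1i * G1 = mat_adjoint (G1 * G1i)" using D D2 G1H by (simp add: adj_mult)
      thus "mat_adjoint G1i * G1 = 1\<^sub>m r" using G1i by simp
    qed
    have DiH: "mat_adjoint Di = Di"
    proof (rule left_inv_eq[OF Dc iD, folded Di_def])
      show "mat_adjoint Di \<in> carrier_mat r r" using Di by simp
      have "mat_adjoint Di * \<Delta> = mat_adjoint (\<Delta> * Di)" using D D2 DH by (simp add: adj_mult)
      thus "mat_adjoint Di * \<Delta> = 1\<^sub>m r" using Di by simp
    qed
    note N2 = N D2 cG1i cDi z1' z2'
    define X0 where "X0 = Gn * (U * (Ph * (Zi * (Eh * (Uh * Gn)))))"
    have X0c: "X0 \<in> carrier_mat n n" unfolding X0_def using Gc Uc Phc Zi Ehc Uhc by simp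
    have AX0: "A * X0 = U * (E * (G1i * (Eh * (Uh * Gn))))"
      unfolding X0_def by (subst A_eq, simp add: N2)
    have X0A: "X0 * A = Gn * (U * (Ph * (Di * (P * Uh))))"
      unfolding X0_def by (subst A_eq, simp add: N2)
    have e1: "A * X0 * A = A" unfolding AX0 by (subst (1 2) A_eq, simp add: N2)
    have e2: "X0 * A * X0 = X0" unfolding X0A by (subst (1 2) X0_def, simp add: N2)
    have AX0c: "A * X0 \<in> carrier_mat n n" using A X0c by simp
    have X0Ac: "X0 * A \<in> carrier_mat n n" using A X0c by simp
    have e3: "mink_adj (A * X0) = A * X0" unfolding mink_adj_sq[OF AX0c] Gn_def[symmetric] unfolding AX0
      by (simp add: N2 adj_mult G1iH EhH UhH GH Eh_def[symmetric] Uh_def[symmetric])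
    have e4: "mink_adj (X0 * A) = X0 * A" unfolding mink_adj_sq[OF X0Ac] Gn_def[symmetric] unfolding X0A
      by (simp add: N2 adj_mult DiH PhH UhH GH Ph_def[symmetric] Uh_def[symmetric])
    have isX0: "is_mink_inv A X0" unfolding is_mink_inv_def using X0c e1 e2 e3 e4 D by simp
    have mi: "mink_inv A = X0" unfolding mink_inv_def
    proof (rule the_equality)
      show "is_mink_inv A X0" by (rule isX0)
      fix Y assume "is_mink_inv A Y"
      thus "Y = X0" using mink_inv_unique[OF A _ isX0] by simp
    qed
    have f1: "mink_G n * U * four_block_mat
              (mat_adjoint K * mat_inv (G1 * \<Sigma> * \<Delta>)) (0\<^sub>m r (n - r))
              (mat_adjoint L * mat_inv (G1 * \<Sigma> * \<Delta>)) (0\<^sub>m (n - r) (n - r))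
              * mat_adjoint U * mink_G n = X0"
      unfolding Gn_def[symmetric] Uh_def[symmetric] Z_def[symmetric] Zi_def[symmetric]
      unfolding FX[OF Zi(1)]
      unfolding X0_def by (simp add: N2)
    have f2: "U * four_block_mat
              ((G1 * mat_adjoint K + G2 * mat_adjoint L) * mat_inv (\<Sigma> * \<Delta>))
              ((G1 * mat_adjoint K + G2 * mat_adjoint L) * mat_inv (G1 * \<Sigma> * \<Delta>) * G2)
              ((G3 * mat_adjoint K + G4 * mat_adjoint L) * mat_inv (\<Sigma> * \<Delta>))
              ((G3 * mat_adjoint K + G4 * mat_adjoint L) * mat_inv (G1 * \<Sigma> * \<Delta>) * G2)
              * mat_adjoint U = X0"
    proof -
      have "four_block_mat
              ((G1 * mat_adjoint K + G2 * mat_adjoint L) * mat_inv (\<Sigma> * \<Delta>))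
              ((G1 * mat_adjoint K + G2 * mat_adjoint L) * mat_inv (G1 * \<Sigma> * \<Delta>) * G2)
              ((G3 * mat_adjoint K + G4 * mat_adjoint L) * mat_inv (\<Sigma> * \<Delta>))
              ((G3 * mat_adjoint K + G4 * mat_adjoint L) * mat_inv (G1 * \<Sigma> * \<Delta>) * G2)
          = four_block_mat (H1 * Zi * G1) (H1 * Zi * G2) (H3 * Zi * G1) (H3 * Zi * G2)"
        unfolding H1_def[symmetric, unfolded Kh_def Lh_def] H3_def[symmetric, unfolded Kh_def Lh_def]
          SD_def[symmetric] SDi_def[symmetric] Z_def[symmetric] Zi_def[symmetric] z3[symmetric]
        using H1c H3c Zi G1 by (simp add: massoc)
      also have "\<dots> = W * Ph * Zi * (Eh * W)" by (rule F6[OF Zi(1), symmetric])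
      finally have fb: "four_block_mat
              ((G1 * mat_adjoint K + G2 * mat_adjoint L) * mat_inv (\<Sigma> * \<Delta>))
              ((G1 * mat_adjoint K + G2 * mat_adjoint L) * mat_inv (G1 * \<Sigma> * \<Delta>) * G2)
              ((G3 * mat_adjoint K + G4 * mat_adjoint L) * mat_inv (\<Sigma> * \<Delta>))
              ((G3 * mat_adjoint K + G4 * mat_adjoint L) * mat_inv (G1 * \<Sigma> * \<Delta>) * G2)
          = W * Ph * Zi * (Eh * W)" .
      show ?thesis unfolding fb Uh_def[symmetric] X0_def W_def by (simp add: N2)
    qed
    show "is_mink_inv A (mink_inv A) \<and> mink_inv A = mink_G n * U * four_block_mat
              (mat_adjoint K * mat_inv (G1 * \<Sigma> * \<Delta>)) (0\<^sub>m r (n - r))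
              (mat_adjoint L * mat_inv (G1 * \<Sigma> * \<Delta>)) (0\<^sub>m (n - r) (n - r))
              * mat_adjoint U * mink_G n
       \<and> mink_inv A = U * four_block_mat
              ((G1 * mat_adjoint K + G2 * mat_adjoint L) * mat_inv (\<Sigma> * \<Delta>))
              ((G1 * mat_adjoint K + G2 * mat_adjoint L) * mat_inv (G1 * \<Sigma> * \<Delta>) * G2)
              ((G3 * mat_adjoint K + G4 * mat_adjoint L) * mat_inv (\<Sigma> * \<Delta>))
              ((G3 * mat_adjoint K + G4 * mat_adjoint L) * mat_inv (G1 * \<Sigma> * \<Delta>) * G2)
              * mat_adjoint U"
      using isX0 mi f1 f2 by simp
  qed
  show ?thesis using P1 P2 P3 by blast
qed

end
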